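(* Let $N\ge1$, $h,\varepsilon\in(0,1)$, and let $\Phi:[-1,1]^N\to[-1,1]^N$ be the opinion operator defined in the context. Let $V^0=(v^0_1,\dots,v^0_N)\in[-1,1]^N$ with $v^0_1\le\dots\le v^0_N$, and let $V^n=\Phi^n(V^0)=(v^n_1,\dots,v^n_N)$. Then: (a) for every $n\ge0$, $v^n_1\le\dots\le v^n_N$; (b) if $v^n_k=1$, then $v^n_l=1$ for all $l>k$; (c) if $v^n_k=1$, then $v^m_k=1$ for all $m>n$.
   Context: For $V=(v_1,\dots,v_N)\in[-1,1]^N$ and each $k$, let $J(v_k)=\{l\in\{1,\dots,N\}:|v_l-v_k|\le\varepsilon\}$ and $I(v_k)=|J(v_k)|$. Put $w_k(V)=v_k+\frac{h}{I(v_k)}\sum_{l\in J(v_k)}v_l$. Then $\Phi(V)=(v_1',\dots,v_N')$ where $v_k'=-1$ if $w_k<-1$, $v_k'=1$ if $w_k>1$, and $v_k'=w_k$ if $|w_k|\le1$. *)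

theory Defs
  imports Complex_Main
begin

(* Opinion vectors V = (v_1,...,v_N) are represented as functions nat => real,
   with only indices 1..N meaningful. *)

definition J :: "nat \<Rightarrow> real \<Rightarrow> (nat \<Rightarrow> real) \<Rightarrow> nat \<Rightarrow> nat set" where
  "J N \<epsilon> V k = {l \<in> {1..N}. \<bar>V l - V k\<bar> \<le> \<epsilon>}"

definition I :: "nat \<Rightarrow> real \<Rightarrow> (nat \<Rightarrow> real) \<Rightarrow> nat \<Rightarrow> nat" where
  "I N \<epsilon> V k = card (J N \<epsilon> V k)"

definition w :: "nat \<Rightarrow> real \<Rightarrow> real \<Rightarrow> (nat \<Rightarrow> real) \<Rightarrow> nat \<Rightarrow> real" where
  "w N h \<epsilon> V k = V k + h / real (I N \<epsilon> V k) * (\<Sum>l\<in>J N \<epsilon> V k. V l)"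

definition clip :: "real \<Rightarrow> real" where
  "clip x = (if x < -1 then -1 else if x > 1 then 1 else x)"

definition Phi :: "nat \<Rightarrow> real \<Rightarrow> real \<Rightarrow> (nat \<Rightarrow> real) \<Rightarrow> (nat \<Rightarrow> real)" where
  "Phi N h \<epsilon> V = (\<lambda>k. if k \<in> {1..N} then clip (w N h \<epsilon> V k) else 0)"

end

theory Submission
  imports Defs
begin

lemma clip_mono: "x \<le> y \<Longrightarrow> clip x \<le> clip y"
  by (auto simp: clip_def)

lemma clip_range: "-1 \<le> clip x \<and> clip x \<le> 1"
  by (auto simp: clip_def)

lemma dsum_nonneg:
  fixes v :: "nat \<Rightarrow> real"
  assumes fA: "finite A" and fB: "finite B"
    and h1: "\<forall>a\<in>A-B. \<forall>b\<in>B. v a \<le> v b"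
    and h2: "\<forall>a\<in>A. \<forall>b\<in>B-A. v a \<le> v b"
  shows "0 \<le> (\<Sum>a\<in>A. \<Sum>b\<in>B. v b - v a)"
proof -
  let ?C = "A \<inter> B"
  have C0: "(\<Sum>a\<in>?C. \<Sum>b\<in>?C. v b - v a) = 0"
  proof -
    have "(\<Sum>a\<in>?C. \<Sum>b\<in>?C. v b - v a) = (\<Sum>a\<in>?C. sum v ?C - real (card ?C) * v a)"
      by (simp only: sum_subtractf sum_constant)
    also have "\<dots> = real (card ?C) * sum v ?C - real (card ?C) * sum v ?C"
      by (simp only: sum_subtractf sum_constant sum_distrib_left[symmetric])
    finally show ?thesis by simp
  qed
  have s1: "(\<Sum>a\<in>A. \<Sum>b\<in>B. v b - v a) = (\<Sum>a\<in>A-B. \<Sum>b\<in>B. v b - v a) + (\<Sum>a\<in>?C. \<Sum>b\<in>B. v b - v a)"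
  proof -
    have "A = (A-B) \<union> ?C" by blast
    then show ?thesis using fA by (metis (no_types, lifting) sum.union_disjoint finite_Diff finite_Int Diff_disjoint Int_Diff_disjoint inf_commute)
  qed
  have s2: "\<And>a. (\<Sum>b\<in>B. v b - v a) = (\<Sum>b\<in>B-A. v b - v a) + (\<Sum>b\<in>?C. v b - v a)"
  proof -
    fix a
    have "B = (B-A) \<union> ?C" by blast
    then show "(\<Sum>b\<in>B. v b - v a) = (\<Sum>b\<in>B-A. v b - v a) + (\<Sum>b\<in>?C. v b - v a)"
      using fB by (metis (no_types, lifting) sum.union_disjoint finite_Diff finite_Int Diff_disjoint Int_Diff_disjoint inf_commute)
  qed
  have n1: "0 \<le> (\<Sum>a\<in>A-B. \<Sum>b\<in>B. v b - v a)"
    using h1 by (intro sum_nonneg) auto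
  have n2: "0 \<le> (\<Sum>a\<in>?C. \<Sum>b\<in>B-A. v b - v a)"
    using h2 by (intro sum_nonneg) auto
  have "(\<Sum>a\<in>?C. \<Sum>b\<in>B. v b - v a) = (\<Sum>a\<in>?C. \<Sum>b\<in>B-A. v b - v a) + (\<Sum>a\<in>?C. \<Sum>b\<in>?C. v b - v a)"
    by (simp add: s2 sum.distrib)
  then show ?thesis using s1 n1 n2 C0 by linarith
qed

lemma avg_mono:
  fixes v :: "nat \<Rightarrow> real"
  assumes fA: "finite A" and fB: "finite B" and kA: "k \<in> A" and lB: "l \<in> B"
    and h1: "\<forall>a\<in>A-B. \<forall>b\<in>B. v a \<le> v b"
    and h2: "\<forall>a\<in>A. \<forall>b\<in>B-A. v a \<le> v b"
  shows "sum v A / real (card A) \<le> sum v B / real (card B)"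
proof -
  have cA: "real (card A) > 0" using fA kA card_gt_0_iff by fastforce
  have cB: "real (card B) > 0" using fB lB card_gt_0_iff by fastforce
  have eq: "(\<Sum>a\<in>A. \<Sum>b\<in>B. v b - v a) = real (card A) * sum v B - real (card B) * sum v A"
  proof -
    have "(\<Sum>a\<in>A. \<Sum>b\<in>B. v b - v a) = (\<Sum>a\<in>A. sum v B - real (card B) * v a)"
      by (simp only: sum_subtractf sum_constant)
    also have "\<dots> = real (card A) * sum v B - real (card B) * sum v A"
      by (simp only: sum_subtractf sum_constant sum_distrib_left[symmetric])
    finally show ?thesis .
  qed
  have "real (card B) * sum v A \<le> real (card A) * sum v B"
    using dsum_nonneg[OF fA fB h1 h2] eq by linarith
  then show ?thesis using cA cB by (simp add: divide_simps mult.commute)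
qed

lemma w_mono:
  fixes V :: "nat \<Rightarrow> real"
  assumes "h \<ge> 0" "\<epsilon> \<ge> 0" "k \<in> {1..N}" "l \<in> {1..N}" "V k \<le> V l"
  shows "w N h \<epsilon> V k \<le> w N h \<epsilon> V l"
proof -
  let ?A = "J N \<epsilon> V k" and ?B = "J N \<epsilon> V l"
  have "sum V ?A / real (card ?A) \<le> sum V ?B / real (card ?B)"
  proof (rule avg_mono)
    show "finite ?A" "finite ?B" by (auto simp: J_def)
    show "k \<in> ?A" "l \<in> ?B" using assms by (auto simp: J_def)
    show "\<forall>a\<in>?A-?B. \<forall>b\<in>?B. V a \<le> V b" using assms(5) by (auto simp: J_def)
    show "\<forall>a\<in>?A. \<forall>b\<in>?B-?A. V a \<le> V b" using assms(5) by (auto simp: J_def)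
  qed
  then have "h * (sum V ?A / real (card ?A)) \<le> h * (sum V ?B / real (card ?B))"
    using assms(1) by (rule mult_left_mono)
  then show ?thesis using assms(5) unfolding w_def I_def by simp
qed

lemma w_one:
  fixes V :: "nat \<Rightarrow> real"
  assumes "h \<ge> 0" "\<epsilon> < 1" "V k = 1"
  shows "w N h \<epsilon> V k \<ge> 1"
proof -
  have "0 \<le> sum V (J N \<epsilon> V k)"
    using assms by (intro sum_nonneg) (auto simp: J_def abs_le_iff)
  then have "0 \<le> h / real (I N \<epsilon> V k) * sum V (J N \<epsilon> V k)"
    using assms(1) by simp
  then show ?thesis using assms(3) unfolding w_def by simp
qed

theorem corollary1:
  fixes N :: nat and h \<epsilon> :: real and V0 :: "nat \<Rightarrow> real"
  assumes "N \<ge> 1"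
    and "0 < h" "h < 1" "0 < \<epsilon>" "\<epsilon> < 1"
    and "\<forall>k\<in>{1..N}. V0 k \<in> {-1..1}"
    and "\<forall>k\<in>{1..N}. \<forall>l\<in>{1..N}. k \<le> l \<longrightarrow> V0 k \<le> V0 l"
  shows "(\<forall>n. \<forall>k\<in>{1..N}. \<forall>l\<in>{1..N}. k \<le> l \<longrightarrow>
            ((Phi N h \<epsilon> ^^ n) V0) k \<le> ((Phi N h \<epsilon> ^^ n) V0) l)
       \<and> (\<forall>n. \<forall>k\<in>{1..N}. ((Phi N h \<epsilon> ^^ n) V0) k = 1 \<longrightarrow>
            (\<forall>l\<in>{1..N}. l > k \<longrightarrow> ((Phi N h \<epsilon> ^^ n) V0) l = 1))
       \<and> (\<forall>n. \<forall>k\<in>{1..N}. ((Phi N h \<epsilon> ^^ n) V0) k = 1 \<longrightarrow>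
            (\<forall>m>n. ((Phi N h \<epsilon> ^^ m) V0) k = 1))"
proof -
  let ?V = "\<lambda>n. (Phi N h \<epsilon> ^^ n) V0"
  have A: "\<forall>k\<in>{1..N}. \<forall>l\<in>{1..N}. k \<le> l \<longrightarrow> ?V n k \<le> ?V n l" for n
  proof (induction n)
    case 0 then show ?case using assms(7) by simp
  next
    case (Suc n)
    show ?case
    proof (intro ballI impI)
      fix k l assume k: "k \<in> {1..N}" and l: "l \<in> {1..N}" and kl: "k \<le> l"
      have "w N h \<epsilon> (?V n) k \<le> w N h \<epsilon> (?V n) l"
        using w_mono[of h \<epsilon> k N l "?V n"] Suc.IH k l kl assms by auto
      then show "?V (Suc n) k \<le> ?V (Suc n) l"
        using k l by (simp add: Phi_def clip_mono)
    qed
  qed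
  have R: "\<forall>k\<in>{1..N}. ?V n k \<le> 1" for n
  proof (cases n)
    case 0 then show ?thesis using assms(6) by simp
  next
    case (Suc m) then show ?thesis using clip_range by (simp add: Phi_def)
  qed
  have B: "\<forall>k\<in>{1..N}. ?V n k = 1 \<longrightarrow> (\<forall>l\<in>{1..N}. l > k \<longrightarrow> ?V n l = 1)" for n
    using A[of n] R[of n] by (metis less_imp_le order_antisym)
  have C1: "?V n k = 1 \<Longrightarrow> k \<in> {1..N} \<Longrightarrow> ?V (Suc n) k = 1" for n k
  proof -
    assume "?V n k = 1" "k \<in> {1..N}"
    then have "w N h \<epsilon> (?V n) k \<ge> 1" using w_one[of h \<epsilon> "?V n" k N] assms by auto
    then show ?thesis using \<open>k \<in> {1..N}\<close> by (simp add: Phi_def clip_def)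
  qed
  have C: "?V n k = 1 \<Longrightarrow> k \<in> {1..N} \<Longrightarrow> ?V (n + d) k = 1" for n k d
    by (induction d) (auto simp del: funpow.simps intro: C1[simplified])
  have C': "\<forall>k\<in>{1..N}. ?V n k = 1 \<longrightarrow> (\<forall>m>n. ?V m k = 1)" for n
    using C by (metis less_imp_add_positive)
  show ?thesis using A B C' by blast
qed

end
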